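(* Let $(E_i)_{i\in I}$ be a family of sets and $\mathcal{U}$ a uniform ultrafilter on $I$. Then the set $L=\{x : \{i\in I : x\in E_i\}\in\mathcal{U}\}$ is a diagonal of the family $(E_i)_{i\in I}$.
   Context: An ultrafilter $\mathcal{U}$ on $I$ is uniform if every $X\in\mathcal{U}$ satisfies $|X|=|I|$. For sets $F,M$ put $I[F,M]=\{i\in I: F\cap M=F\cap E_i\}$. A set $D$ is a diagonal of $(E_i)_{i\in I}$ if for every finite set $F$ one has $|I[F,D]|=|I|$. *)

theory Defs
  imports Main "HOL-Library.Equipollence"
begin

definition ultrafilter_on :: "'i set \<Rightarrow> 'i set set \<Rightarrow> bool" where
  "ultrafilter_on I U \<longleftrightarrow>
     U \<subseteq> Pow I \<and> I \<in> U \<and> {} \<notin> U \<and>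
     (\<forall>X\<in>U. \<forall>Y\<in>U. X \<inter> Y \<in> U) \<and>
     (\<forall>X\<in>U. \<forall>Y. X \<subseteq> Y \<and> Y \<subseteq> I \<longrightarrow> Y \<in> U) \<and>
     (\<forall>X. X \<subseteq> I \<longrightarrow> X \<in> U \<or> I - X \<in> U)"

definition uniform_ultrafilter_on :: "'i set \<Rightarrow> 'i set set \<Rightarrow> bool" where
  "uniform_ultrafilter_on I U \<longleftrightarrow> ultrafilter_on I U \<and> (\<forall>X\<in>U. X \<approx> I)"

definition Iset :: "'i set \<Rightarrow> ('i \<Rightarrow> 'a set) \<Rightarrow> 'a set \<Rightarrow> 'a set \<Rightarrow> 'i set" where
  "Iset I E F M = {i \<in> I. F \<inter> M = F \<inter> E i}"

definition diagonal :: "'i set \<Rightarrow> ('i \<Rightarrow> 'a set) \<Rightarrow> 'a set \<Rightarrow> bool" where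
  "diagonal I E D \<longleftrightarrow> (\<forall>F. finite F \<longrightarrow> Iset I E F D \<approx> I)"

end

theory Submission
  imports Defs
begin

theorem mainTheorem6:
  fixes I :: "'i set" and E :: "'i \<Rightarrow> 'a set" and U :: "'i set set"
  assumes "uniform_ultrafilter_on I U"
  shows "diagonal I E {x. {i \<in> I. x \<in> E i} \<in> U}"
proof -
  define L where "L = {x. {i \<in> I. x \<in> E i} \<in> U}"
  have uf: "ultrafilter_on I U" and un: "\<forall>X\<in>U. X \<approx> I"
    using assms unfolding uniform_ultrafilter_on_def by auto
  note u = uf[unfolded ultrafilter_on_def]
  define B where "B x = (if x \<in> L then {i\<in>I. x\<in>E i} else I - {i\<in>I. x\<in>E i})" for x
  have BU: "B x \<in> U" for x
  proof (cases "x \<in> L")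
    case True then show ?thesis by (simp add: B_def L_def)
  next
    case False
    then have "{i\<in>I. x\<in>E i} \<notin> U" by (simp add: L_def)
    moreover have "{i\<in>I. x\<in>E i} \<subseteq> I" by auto
    ultimately show ?thesis using u False unfolding B_def by metis
  qed
  have fin: "finite F \<Longrightarrow> I \<inter> (\<Inter>x\<in>F. B x) \<in> U" for F
  proof (induction F rule: finite_induct)
    case empty then show ?case using u by simp
  next
    case (insert a F)
    have "I \<inter> (\<Inter>x\<in>insert a F. B x) = B a \<inter> (I \<inter> (\<Inter>x\<in>F. B x))" by auto
    then show ?case using u insert BU by metis
  qed
  show ?thesis unfolding diagonal_def L_def[symmetric]
  proof (intro allI impI)
    fix F :: "'a set" assume "finite F"
    define X where "X = I \<inter> (\<Inter>x\<in>F. B x)"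
    have XU: "X \<in> U" using fin \<open>finite F\<close> X_def by simp
    have sub: "X \<subseteq> Iset I E F L"
      unfolding X_def Iset_def B_def by (auto split: if_splits)
    have "Iset I E F L \<subseteq> I" unfolding Iset_def by auto
    then have l1: "Iset I E F L \<lesssim> I" by (rule subset_imp_lepoll)
    have "I \<lesssim> X" using un XU eqpoll_sym eqpoll_imp_lepoll by blast
    also have "X \<lesssim> Iset I E F L" using sub by (rule subset_imp_lepoll)
    finally show "Iset I E F L \<approx> I" using l1 lepoll_antisym by blast
  qed
qed

end
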